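(* Let $V$ be a finite nonempty set and $f:\{0,1\}^V\to\{0,1\}^V$ an and-net. Every subnetwork of $f$ has a unique fixed point if and only if $f$ has no circular subnetwork (no subnetwork that is positive-circular or negative-circular).
   Context: For nonempty $I\subseteq V$ and $z\in\{0,1\}^{V\setminus I}$, the subnetwork of $f$ induced by $z$ is $h:\{0,1\}^I\to\{0,1\}^I$ with $h(x|_I)=f(x)|_I$ for all $x$ whose restriction to $V\setminus I$ is $z$ ($f$ is a subnetwork of itself). For a network $g$ on $W$ and $x^{j\alpha}$ the point equal to $x$ except its $j$-component is $\alpha$, the global interaction graph $G(g)$ is the signed digraph on $W$ with a positive (resp. negative) arc from $j$ to $i$ iff $g_i(x^{j1})-g_i(x^{j0})=1$ (resp. $=-1$) for at least one $x$. $f$ is an and-net if $G(f)$ has at most one arc from $j$ to $i$ for all $i,j$ and for every $i$ and $x$: $f_i(x)=1$ iff $G(f)$ has no positive arc $j\to i$ with $x_j=0$ and no negative arc $j\to i$ with $x_j=1$. A cycle is a subgraph with at most one arc between any ordered pair whose underlying unsigned digraph is a directed cycle; positive (negative) if it has an even (odd) number of negative arcs. $g$ is positive-circular (negative-circular) if $G(g)$ itself is a positive (negative) cycle through all vertices of $W$. *)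

theory Defs
  imports Main
begin

text \<open>Configurations in {0,1}^W are represented as Boolean functions that are False outside W.
A network on W is a map g on configurations; only its values on confs W and components in W matter.\<close>

definition confs :: "'v set \<Rightarrow> ('v \<Rightarrow> bool) set" where
  "confs W = {x. \<forall>v. v \<notin> W \<longrightarrow> \<not> x v}"

definition pos_arc :: "'v set \<Rightarrow> (('v \<Rightarrow> bool) \<Rightarrow> ('v \<Rightarrow> bool)) \<Rightarrow> 'v \<Rightarrow> 'v \<Rightarrow> bool" where
  "pos_arc W g j i \<longleftrightarrow> j \<in> W \<and> i \<in> W \<and>
     (\<exists>x\<in>confs W. \<not> g (x(j := False)) i \<and> g (x(j := True)) i)"

definition neg_arc :: "'v set \<Rightarrow> (('v \<Rightarrow> bool) \<Rightarrow> ('v \<Rightarrow> bool)) \<Rightarrow> 'v \<Rightarrow> 'v \<Rightarrow> bool" where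
  "neg_arc W g j i \<longleftrightarrow> j \<in> W \<and> i \<in> W \<and>
     (\<exists>x\<in>confs W. g (x(j := False)) i \<and> \<not> g (x(j := True)) i)"

definition and_net :: "'v set \<Rightarrow> (('v \<Rightarrow> bool) \<Rightarrow> ('v \<Rightarrow> bool)) \<Rightarrow> bool" where
  "and_net V f \<longleftrightarrow>
     (\<forall>i j. \<not> (pos_arc V f j i \<and> neg_arc V f j i)) \<and>
     (\<forall>i\<in>V. \<forall>x\<in>confs V. f x i \<longleftrightarrow>
        (\<not> (\<exists>j. pos_arc V f j i \<and> \<not> x j)) \<and> \<not> (\<exists>j. neg_arc V f j i \<and> x j))"

definition sub_data :: "'v set \<Rightarrow> 'v set \<Rightarrow> ('v \<Rightarrow> bool) \<Rightarrow> bool" where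
  "sub_data V I z \<longleftrightarrow> I \<noteq> {} \<and> I \<subseteq> V \<and> z \<in> confs (V - I)"

definition subnet :: "'v set \<Rightarrow> (('v \<Rightarrow> bool) \<Rightarrow> ('v \<Rightarrow> bool)) \<Rightarrow> 'v set \<Rightarrow> ('v \<Rightarrow> bool)
    \<Rightarrow> ('v \<Rightarrow> bool) \<Rightarrow> ('v \<Rightarrow> bool)" where
  "subnet V f I z y = (\<lambda>v. v \<in> I \<and> f (\<lambda>u. if u \<in> I then y u else z u) v)"

definition cycle_arcs :: "'v list \<Rightarrow> ('v \<times> 'v) set" where
  "cycle_arcs vs = {(vs ! k, vs ! ((k + 1) mod length vs)) | k. k < length vs}"

definition is_full_cycle :: "'v set \<Rightarrow> (('v \<Rightarrow> bool) \<Rightarrow> ('v \<Rightarrow> bool)) \<Rightarrow> 'v list \<Rightarrow> bool" where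
  "is_full_cycle W g vs \<longleftrightarrow>
     distinct vs \<and> set vs = W \<and> vs \<noteq> [] \<and>
     (\<forall>i j. \<not> (pos_arc W g j i \<and> neg_arc W g j i)) \<and>
     {(j, i). pos_arc W g j i \<or> neg_arc W g j i} = cycle_arcs vs"

definition num_neg_arcs :: "'v set \<Rightarrow> (('v \<Rightarrow> bool) \<Rightarrow> ('v \<Rightarrow> bool)) \<Rightarrow> nat" where
  "num_neg_arcs W g = card {(j, i). neg_arc W g j i}"

definition positive_circular :: "'v set \<Rightarrow> (('v \<Rightarrow> bool) \<Rightarrow> ('v \<Rightarrow> bool)) \<Rightarrow> bool" where
  "positive_circular W g \<longleftrightarrow> (\<exists>vs. is_full_cycle W g vs) \<and> even (num_neg_arcs W g)"

definition negative_circular :: "'v set \<Rightarrow> (('v \<Rightarrow> bool) \<Rightarrow> ('v \<Rightarrow> bool)) \<Rightarrow> bool" where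
  "negative_circular W g \<longleftrightarrow> (\<exists>vs. is_full_cycle W g vs) \<and> odd (num_neg_arcs W g)"

end

theory Submission
  imports Defs
begin

definition holds :: "('v \<Rightarrow> bool option) \<Rightarrow> ('v \<Rightarrow> bool) \<Rightarrow> bool" where
  "holds L x \<longleftrightarrow> (\<forall>j s. L j = Some s \<longrightarrow> x j = s)"

definition repr :: "'v set \<Rightarrow> (('v \<Rightarrow> bool) \<Rightarrow> ('v \<Rightarrow> bool)) \<Rightarrow> ('v \<Rightarrow> 'v \<Rightarrow> bool option) \<Rightarrow> ('v \<Rightarrow> bool) \<Rightarrow> bool" where
  "repr I g lit cc \<longleftrightarrow> (\<forall>v\<in>I. dom (lit v) \<subseteq> I \<and> (\<forall>x\<in>confs I. g x v = (holds (lit v) x = cc v)))"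

definition cls :: "'v set \<Rightarrow> (('v \<Rightarrow> bool) \<Rightarrow> ('v \<Rightarrow> bool)) \<Rightarrow> bool" where
  "cls I g \<longleftrightarrow> (\<exists>lit cc. repr I g lit cc)"

definition oz :: "'v set \<Rightarrow> (('v \<Rightarrow> bool) \<Rightarrow> ('v \<Rightarrow> bool)) \<Rightarrow> bool" where
  "oz I g \<longleftrightarrow> (\<forall>x v. v \<notin> I \<longrightarrow> \<not> g x v)"

definition uniq :: "'v set \<Rightarrow> (('v \<Rightarrow> bool) \<Rightarrow> ('v \<Rightarrow> bool)) \<Rightarrow> bool" where
  "uniq I g \<longleftrightarrow> (\<exists>!y. y \<in> confs I \<and> g y = y)"

definition minimal :: "'v set \<Rightarrow> (('v \<Rightarrow> bool) \<Rightarrow> ('v \<Rightarrow> bool)) \<Rightarrow> bool" where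
  "minimal I g \<longleftrightarrow> (\<forall>J w. sub_data I J w \<and> J \<noteq> I \<longrightarrow> uniq J (subnet I g J w))"

definition compl :: "'v set \<Rightarrow> ('v \<Rightarrow> bool) \<Rightarrow> ('v \<Rightarrow> bool)" where
  "compl I y = (\<lambda>u. u \<in> I \<and> \<not> y u)"

definition neg_at :: "'v \<Rightarrow> (('v \<Rightarrow> bool) \<Rightarrow> ('v \<Rightarrow> bool)) \<Rightarrow> (('v \<Rightarrow> bool) \<Rightarrow> ('v \<Rightarrow> bool))" where
  "neg_at i g = (\<lambda>x v. if v = i then \<not> g x v else g x v)"

lemma confsI: "(\<And>v. v \<notin> W \<Longrightarrow> \<not> x v) \<Longrightarrow> x \<in> confs W"
  by (auto simp: confs_def)
lemma confsD: "x \<in> confs W \<Longrightarrow> v \<notin> W \<Longrightarrow> \<not> x v"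
  by (auto simp: confs_def)

lemma subnet_oz: "oz J (subnet I g J w)"
  by (simp add: oz_def subnet_def)

lemma sub_sub:
  assumes "J \<subseteq> I"
  shows "subnet I (subnet V f I z) J w = subnet V f J (\<lambda>u. if u \<in> I then w u else z u)"
proof (rule ext)+
  fix y v
  have e: "(\<lambda>u'. if u' \<in> I then (if u' \<in> J then y u' else w u') else z u')
         = (\<lambda>u. if u \<in> J then y u else (if u \<in> I then w u else z u))"
    using assms by (auto intro!: ext)
  show "subnet I (subnet V f I z) J w y v = subnet V f J (\<lambda>u. if u \<in> I then w u else z u) y v"
    unfolding subnet_def using assms e by auto
qed

lemma sub_data_comp:
  assumes "sub_data V I z" "sub_data I J w"
  shows "sub_data V J (\<lambda>u. if u \<in> I then w u else z u)"
  using assms unfolding sub_data_def confs_def by auto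

lemma glue_confs: "y \<in> confs J \<Longrightarrow> w \<in> confs (I - J) \<Longrightarrow> J \<subseteq> I \<Longrightarrow>
   (\<lambda>u. if u \<in> J then y u else w u) \<in> confs I"
  unfolding confs_def by auto

lemma holds_empty: "holds (\<lambda>_. None) x"
  by (simp add: holds_def)

lemma cls_subnet:
  assumes r: "repr I g lit cc" and JI: "J \<subseteq> I" and w: "w \<in> confs (I - J)"
  shows "cls J (subnet I g J w)"
proof -
  define bad where "bad v \<longleftrightarrow> (\<exists>j s. lit v j = Some s \<and> j \<notin> J \<and> w j \<noteq> s)" for v
  define lit' where "lit' v = (if bad v then (\<lambda>_. None) else lit v |` J)" for v
  define cc' where "cc' v = (if bad v then \<not> cc v else cc v)" for v
  have "repr J (subnet I g J w) lit' cc'"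
    unfolding repr_def
  proof (rule ballI, rule conjI)
    fix v assume vJ: "v \<in> J"
    show "dom (lit' v) \<subseteq> J" by (auto simp: lit'_def restrict_map_def split: if_splits)
    show "\<forall>x\<in>confs J. subnet I g J w x v = (holds (lit' v) x = cc' v)"
    proof
      fix x assume x: "x \<in> confs J"
      let ?y = "(\<lambda>u. if u \<in> J then x u else w u)"
      have y: "?y \<in> confs I" using glue_confs[OF x w JI] .
      have H: "\<forall>x\<in>confs I. g x v = (holds (lit v) x = cc v)" using r vJ JI unfolding repr_def by auto
      have gv: "g ?y v = (holds (lit v) ?y = cc v)" by (rule bspec[OF H y])
      have sv: "subnet I g J w x v = g ?y v" using vJ by (simp add: subnet_def)
      show "subnet I g J w x v = (holds (lit' v) x = cc' v)"
      proof (cases "bad v")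
        case True
        then obtain j s where "lit v j = Some s" "j \<notin> J" "w j \<noteq> s" unfolding bad_def by auto
        then have "\<not> holds (lit v) ?y" unfolding holds_def by auto
        then show ?thesis using sv gv True by (simp add: lit'_def cc'_def holds_empty)
      next
        case False
        have "holds (lit v) ?y = holds (lit v |` J) x"
          using False unfolding holds_def bad_def restrict_map_def by (auto split: if_splits)
        then show ?thesis using sv gv False by (simp add: lit'_def cc'_def)
      qed
    qed
  qed
  then show ?thesis unfolding cls_def by blast
qed

lemma cls_neg:
  assumes "repr I g lit cc"
  shows "repr I (neg_at i g) lit (cc(i := \<not> cc i))"
  using assms unfolding repr_def neg_at_def by auto

lemma holds_upd:
  "holds L (x(j := b)) \<longleftrightarrow> (case L j of None \<Rightarrow> True | Some s \<Rightarrow> b = s) \<and> (\<forall>u s. u \<noteq> j \<longrightarrow> L u = Some s \<longrightarrow> x u = s)"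
  unfolding holds_def by (auto split: option.splits)

lemma arcs_repr:
  assumes r: "repr I g lit cc" and i: "i \<in> I"
  shows "pos_arc I g j i \<longleftrightarrow> (\<exists>s. lit i j = Some s \<and> s = cc i)"
    and "neg_arc I g j i \<longleftrightarrow> (\<exists>s. lit i j = Some s \<and> s \<noteq> cc i)"
proof -
  have dom: "dom (lit i) \<subseteq> I" and gi: "\<forall>x\<in>confs I. g x i = (holds (lit i) x = cc i)"
    using r i unfolding repr_def by auto
  define R where "R x \<longleftrightarrow> (\<forall>u s. u \<noteq> j \<longrightarrow> lit i u = Some s \<longrightarrow> x u = s)" for x
  have upd: "x(j := b) \<in> confs I" if "x \<in> confs I" "j \<in> I" for x b
    using that by (auto simp: confs_def)
  have gS: "g (x(j:=b)) i = ((b = s \<and> R x) = cc i)"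
    if "x \<in> confs I" "j \<in> I" "lit i j = Some s" for x b s
  proof -
    have "g (x(j:=b)) i = (holds (lit i) (x(j:=b)) = cc i)" using gi upd[OF that(1,2)] by blast
    moreover have "holds (lit i) (x(j:=b)) = (b = s \<and> R x)"
      unfolding holds_upd R_def using that(3) by simp
    ultimately show ?thesis by simp
  qed
  have gN: "g (x(j:=b)) i = (R x = cc i)"
    if "x \<in> confs I" "j \<in> I" "lit i j = None" for x b
  proof -
    have "g (x(j:=b)) i = (holds (lit i) (x(j:=b)) = cc i)" using gi upd[OF that(1,2)] by blast
    moreover have "holds (lit i) (x(j:=b)) = R x"
      unfolding holds_upd R_def using that(3) by simp
    ultimately show ?thesis by simp
  qed
  define x0 where "x0 = (\<lambda>u. u \<in> I \<and> lit i u = Some True)"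
  have x0: "x0 \<in> confs I" by (auto simp: x0_def confs_def)
  have R0: "R x0"
    unfolding R_def x0_def
  proof (intro allI impI)
    fix u s assume "u \<noteq> j" "lit i u = Some s"
    then have "u \<in> I" using dom by auto
    then show "(u \<in> I \<and> lit i u = Some True) = s" using \<open>lit i u = Some s\<close> by (cases s) auto
  qed
  have P: "pos_arc I g j i \<longleftrightarrow> j \<in> I \<and> (\<exists>x\<in>confs I. \<not> g (x(j := False)) i \<and> g (x(j := True)) i)"
    unfolding pos_arc_def using i by simp
  have N: "neg_arc I g j i \<longleftrightarrow> j \<in> I \<and> (\<exists>x\<in>confs I. g (x(j := False)) i \<and> \<not> g (x(j := True)) i)"
    unfolding neg_arc_def using i by simp
  show "pos_arc I g j i \<longleftrightarrow> (\<exists>s. lit i j = Some s \<and> s = cc i)"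
  proof
    assume "pos_arc I g j i"
    then obtain x where jI: "j \<in> I" and x: "x \<in> confs I" "\<not> g (x(j := False)) i" "g (x(j := True)) i"
      using P by blast
    show "\<exists>s. lit i j = Some s \<and> s = cc i"
    proof (cases "lit i j")
      case None
      then show ?thesis using gN[OF x(1) jI None] x by simp
    next
      case (Some s)
      then show ?thesis using gS[OF x(1) jI Some] x by auto
    qed
  next
    assume "\<exists>s. lit i j = Some s \<and> s = cc i"
    then obtain s where s: "lit i j = Some s" "s = cc i" by blast
    then have jI: "j \<in> I" using dom by auto
    have "\<not> g (x0(j := False)) i \<and> g (x0(j := True)) i"
      using gS[OF x0 jI s(1)] R0 s(2) by simp
    then show "pos_arc I g j i" using P jI x0 by blast
  qed
  show "neg_arc I g j i \<longleftrightarrow> (\<exists>s. lit i j = Some s \<and> s \<noteq> cc i)"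
  proof
    assume "neg_arc I g j i"
    then obtain x where jI: "j \<in> I" and x: "x \<in> confs I" "g (x(j := False)) i" "\<not> g (x(j := True)) i"
      using N by blast
    show "\<exists>s. lit i j = Some s \<and> s \<noteq> cc i"
    proof (cases "lit i j")
      case None
      then show ?thesis using gN[OF x(1) jI None] x by simp
    next
      case (Some s)
      then show ?thesis using gS[OF x(1) jI Some] x by auto
    qed
  next
    assume "\<exists>s. lit i j = Some s \<and> s \<noteq> cc i"
    then obtain s where s: "lit i j = Some s" "s \<noteq> cc i" by blast
    then have jI: "j \<in> I" using dom by auto
    have "g (x0(j := False)) i \<and> \<not> g (x0(j := True)) i"
      using gS[OF x0 jI s(1)] R0 s(2) by (cases s) auto
    then show "neg_arc I g j i" using N jI x0 by blast
  qed
qed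

lemma arcs_neg_at:
  "pos_arc I (neg_at i g) j v \<longleftrightarrow> (if v = i then neg_arc I g j v else pos_arc I g j v)"
  "neg_arc I (neg_at i g) j v \<longleftrightarrow> (if v = i then pos_arc I g j v else neg_arc I g j v)"
  unfolding pos_arc_def neg_arc_def neg_at_def by auto

lemma full_cycle_neg_at:
  "is_full_cycle I (neg_at i g) vs \<longleftrightarrow> is_full_cycle I g vs"
proof -
  have a: "{(j, v). pos_arc I (neg_at i g) j v \<or> neg_arc I (neg_at i g) j v}
        = {(j, v). pos_arc I g j v \<or> neg_arc I g j v}"
    by (auto simp: arcs_neg_at split: if_splits)
  have b: "(\<forall>v j. \<not> (pos_arc I (neg_at i g) j v \<and> neg_arc I (neg_at i g) j v))
        = (\<forall>v j. \<not> (pos_arc I g j v \<and> neg_arc I g j v))"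
    by (auto simp: arcs_neg_at split: if_splits)
  show ?thesis unfolding is_full_cycle_def a b ..
qed

lemma selfdual_nonuniq:
  assumes ne: "J \<noteq> {}" and ozh: "oz J h"
    and sd: "\<And>y v. y \<in> confs J \<Longrightarrow> v \<in> J \<Longrightarrow> h (compl J y) v = (\<not> h y v)"
  shows "\<not> uniq J h"
proof
  assume "uniq J h"
  then obtain y where y: "y \<in> confs J" "h y = y"
    and un: "\<And>y'. y' \<in> confs J \<Longrightarrow> h y' = y' \<Longrightarrow> y' = y" unfolding uniq_def by blast
  have c: "compl J y \<in> confs J" by (auto simp: compl_def confs_def)
  have "h (compl J y) = compl J y"
  proof
    fix v show "h (compl J y) v = compl J y v"
    proof (cases "v \<in> J")
      case True
      then show ?thesis using sd[OF y(1) True] fun_cong[OF y(2), of v] by (simp add: compl_def)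
    next
      case False
      then show ?thesis using ozh by (simp add: oz_def compl_def)
    qed
  qed
  then have "compl J y = y" using un c by blast
  moreover obtain v where "v \<in> J" using ne by blast
  ultimately show False by (metis compl_def)
qed

locale mn =
  fixes I :: "'v set" and g :: "('v \<Rightarrow> bool) \<Rightarrow> ('v \<Rightarrow> bool)"
    and lit :: "'v \<Rightarrow> 'v \<Rightarrow> bool option" and cc :: "'v \<Rightarrow> bool"
  assumes fin: "finite I" and ne: "I \<noteq> {}" and rep: "repr I g lit cc"
    and ozg: "oz I g" and mini: "minimal I g"
begin

lemma gv: "v \<in> I \<Longrightarrow> x \<in> confs I \<Longrightarrow> g x v = (holds (lit v) x = cc v)"
  using rep unfolding repr_def by blast

lemma domI: "v \<in> I \<Longrightarrow> dom (lit v) \<subseteq> I"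
  using rep unfolding repr_def by blast

lemma fp_ext:
  assumes "y \<in> confs I" "\<And>v. v \<in> I \<Longrightarrow> g y v = y v"
  shows "g y = y"
proof
  fix v show "g y v = y v"
    using assms ozg by (cases "v \<in> I") (auto simp: oz_def confs_def)
qed

lemma two_fp:
  assumes B: "B \<subseteq> I" "B \<noteq> {}" "B \<noteq> I"
    and y: "y1 \<in> confs I" "y2 \<in> confs I"
    and agree: "\<And>u. u \<in> I - B \<Longrightarrow> y1 u = y2 u"
    and diff: "\<exists>u\<in>B. y1 u \<noteq> y2 u"
    and f1: "\<And>u. u \<in> B \<Longrightarrow> g y1 u = y1 u" and f2: "\<And>u. u \<in> B \<Longrightarrow> g y2 u = y2 u"
  shows False
proof -
  define w where "w = (\<lambda>u. u \<in> I - B \<and> y1 u)"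
  have sd: "sub_data I B w" using B by (auto simp: sub_data_def w_def confs_def)
  then have un: "uniq B (subnet I g B w)" using mini B(3) unfolding minimal_def by blast
  define z1 where "z1 = (\<lambda>u. u \<in> B \<and> y1 u)"
  define z2 where "z2 = (\<lambda>u. u \<in> B \<and> y2 u)"
  have gl1: "(\<lambda>u. if u \<in> B then z1 u else w u) = y1"
    using y(1) by (auto simp: z1_def w_def confs_def intro!: ext)
  have gl2: "(\<lambda>u. if u \<in> B then z2 u else w u) = y2"
    using y agree by (auto simp: z2_def w_def confs_def intro!: ext)
  have s1: "subnet I g B w z1 = z1" unfolding subnet_def gl1 using f1 by (auto simp: z1_def intro!: ext)
  have s2: "subnet I g B w z2 = z2" unfolding subnet_def gl2 using f2 by (auto simp: z2_def intro!: ext)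
  have c: "z1 \<in> confs B" "z2 \<in> confs B" by (auto simp: z1_def z2_def confs_def)
  have "z1 \<noteq> z2" using diff by (auto simp: z1_def z2_def fun_eq_iff)
  then show False using un s1 s2 c unfolding uniq_def by blast
qed

lemma dom_ne:
  assumes nu: "\<not> uniq I g" and v: "v \<in> I"
  shows "dom (lit v) \<noteq> {}"
proof
  assume d: "dom (lit v) = {}"
  have const: "g x v = cc v" if "x \<in> confs I" for x
  proof -
    have "holds (lit v) x" using d unfolding holds_def by auto
    then show ?thesis using gv[OF v that] by simp
  qed
  show False
  proof (cases "I = {v}")
    case True
    define y where "y = (\<lambda>u. u = v \<and> cc v)"
    have yc: "y \<in> confs I" using True by (auto simp: y_def confs_def)
    have fy: "g y = y" by (rule fp_ext[OF yc]) (use True const[OF yc] in \<open>auto simp: y_def\<close>)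
    have "y' = y" if "y' \<in> confs I" "g y' = y'" for y'
    proof
      fix u show "y' u = y u"
      proof (cases "u = v")
        case True
        then show ?thesis using const[OF that(1)] fun_cong[OF that(2), of v] by (simp add: y_def)
      next
        case False
        then show ?thesis using that(1) \<open>I = {v}\<close> by (auto simp: y_def confs_def)
      qed
    qed
    then have "uniq I g" using yc fy unfolding uniq_def by blast
    with nu show False by simp
  next
    case False
    let ?B = "I - {v}"
    define w where "w = (\<lambda>u. u = v \<and> cc v)"
    have sd: "sub_data I ?B w" using False v ne by (auto simp: sub_data_def w_def confs_def)
    have "?B \<noteq> I" using v by auto
    then have "uniq ?B (subnet I g ?B w)" using mini sd unfolding minimal_def by blast
    then obtain z where z: "z \<in> confs ?B" "subnet I g ?B w z = z" unfolding uniq_def by blast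
    define Y where "Y = (\<lambda>u. if u \<in> ?B then z u else w u)"
    have Yc: "Y \<in> confs I" using z v by (auto simp: Y_def w_def confs_def)
    have fB: "g Y u = Y u" if "u \<in> ?B" for u
    proof -
      have "subnet I g ?B w z u = g Y u" using that unfolding subnet_def Y_def by simp
      then show ?thesis using fun_cong[OF z(2), of u] that by (simp add: Y_def)
    qed
    have fv: "g Y v = Y v" using const[OF Yc] by (simp add: Y_def w_def)
    have fpY: "g Y = Y" by (rule fp_ext[OF Yc]) (use fB fv in blast)
    from nu fpY Yc obtain y' where y': "y' \<in> confs I" "g y' = y'" "y' \<noteq> Y" unfolding uniq_def by blast
    have Yv: "Y v = cc v" by (simp add: Y_def w_def)
    have yv: "y' v = Y v" using const[OF y'(1)] fun_cong[OF y'(2), of v] Yv by simp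
    obtain u where u: "y' u \<noteq> Y u" using y'(3) by (auto simp: fun_eq_iff)
    have uB: "u \<in> ?B" using u yv y'(1) Yc by (auto simp: confs_def)
    show False
    proof (rule two_fp[of ?B Y y'])
      show "?B \<subseteq> I" "?B \<noteq> {}" "?B \<noteq> I" using False v ne \<open>?B \<noteq> I\<close> by auto
      show "Y \<in> confs I" "y' \<in> confs I" using Yc y'(1) .
      show "\<And>u. u \<in> I - ?B \<Longrightarrow> Y u = y' u" using yv by auto
      show "\<exists>u\<in>?B. Y u \<noteq> y' u" using uB u by metis
      show "\<And>u. u \<in> ?B \<Longrightarrow> g Y u = Y u" using fB .
      show "\<And>u. u \<in> ?B \<Longrightarrow> g y' u = y' u" using y'(2) by simp
    qed
  qed
qed

lemma compl_fp:
  assumes a: "a \<in> confs I" "g a = a" and b: "b \<in> confs I" "g b = b" and ab: "a \<noteq> b"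
  shows "b = compl I a"
proof
  fix u show "b u = compl I a u"
  proof (cases "u \<in> I")
    case False then show ?thesis using b(1) by (simp add: compl_def confs_def)
  next
    case True
    show ?thesis
    proof (rule ccontr)
      assume "b u \<noteq> compl I a u"
      then have eq: "a u = b u" using True by (auto simp: compl_def)
      obtain i0 where i0: "a i0 \<noteq> b i0" using ab by (auto simp: fun_eq_iff)
      have i0I: "i0 \<in> I" using i0 a(1) b(1) by (auto simp: confs_def)
      have i0u: "i0 \<noteq> u" using i0 eq by auto
      show False
      proof (rule two_fp[of "I - {u}" a b])
        show "I - {u} \<subseteq> I" "I - {u} \<noteq> {}" "I - {u} \<noteq> I" using i0I i0u True by auto
        show "a \<in> confs I" "b \<in> confs I" using a(1) b(1) .
        show "\<And>v. v \<in> I - (I - {u}) \<Longrightarrow> a v = b v" using eq by auto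
        show "\<exists>v\<in>I - {u}. a v \<noteq> b v" using i0 i0I i0u by blast
        show "\<And>v. v \<in> I - {u} \<Longrightarrow> g a v = a v" using a(2) by simp
        show "\<And>v. v \<in> I - {u} \<Longrightarrow> g b v = b v" using b(2) by simp
      qed
    qed
  qed
qed

end

locale cA = mn +
  fixes a :: "'a \<Rightarrow> bool"
  assumes aC: "a \<in> confs I" and fa: "g a = a" and fca: "g (compl I a) = compl I a"
begin

definition X :: "'a set \<Rightarrow> 'a \<Rightarrow> bool" where
  "X S = (\<lambda>u. u \<in> I \<and> (if u \<in> S then a u else \<not> a u))"
definition en :: "'a \<Rightarrow> 'a set \<Rightarrow> bool" where
  "en v S \<longleftrightarrow> g (X S) v = a v"
definition isAND :: "'a \<Rightarrow> bool" where
  "isAND v \<longleftrightarrow> (\<forall>j s. lit v j = Some s \<longrightarrow> s = a j) \<and> cc v = a v"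
definition isOR :: "'a \<Rightarrow> bool" where
  "isOR v \<longleftrightarrow> (\<forall>j s. lit v j = Some s \<longrightarrow> s = (\<not> a j)) \<and> cc v = (\<not> a v)"

lemma X_confs: "X S \<in> confs I" by (auto simp: X_def confs_def)

lemma compl_confs: "compl I a \<in> confs I" by (auto simp: compl_def confs_def)

lemma X_empty: "X {} = compl I a" by (auto simp: X_def compl_def intro!: ext)
lemma X_I: "X I = a" using aC by (auto simp: X_def confs_def intro!: ext)

lemma types: assumes v: "v \<in> I" shows "isAND v \<or> isOR v"
proof -
  have ga: "(holds (lit v) a = cc v) = a v" using gv[OF v aC] fun_cong[OF fa, of v] by simp
  have gc: "(holds (lit v) (compl I a) = cc v) = (\<not> a v)"
    using gv[OF v compl_confs] fun_cong[OF fca, of v] v by (simp add: compl_def)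
  show ?thesis
  proof (cases "holds (lit v) a")
    case True
    then have "\<forall>j s. lit v j = Some s \<longrightarrow> s = a j" unfolding holds_def by auto
    moreover have "cc v = a v" using ga True by simp
    ultimately show ?thesis unfolding isAND_def by simp
  next
    case False
    then have h2: "holds (lit v) (compl I a)" using ga gc by auto
    have "\<forall>j s. lit v j = Some s \<longrightarrow> s = (\<not> a j)"
    proof (intro allI impI)
      fix j s assume js: "lit v j = Some s"
      then have "j \<in> I" using domI[OF v] by auto
      then show "s = (\<not> a j)" using h2 js unfolding holds_def compl_def by auto
    qed
    moreover have "cc v = (\<not> a v)" using gc h2 by simp
    ultimately show ?thesis unfolding isOR_def by simp
  qed
qed

lemma en_AND:
  assumes v: "v \<in> I" and t: "isAND v"
  shows "en v S \<longleftrightarrow> dom (lit v) \<subseteq> S"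
proof -
  have "holds (lit v) (X S) \<longleftrightarrow> dom (lit v) \<subseteq> S"
  proof
    assume h: "holds (lit v) (X S)"
    show "dom (lit v) \<subseteq> S"
    proof
      fix j assume "j \<in> dom (lit v)"
      then obtain s where js: "lit v j = Some s" by auto
      then have "j \<in> I" using domI[OF v] by auto
      moreover have "s = a j" using t js unfolding isAND_def by auto
      ultimately show "j \<in> S" using h js unfolding holds_def X_def by (auto split: if_splits)
    qed
  next
    assume "dom (lit v) \<subseteq> S"
    then show "holds (lit v) (X S)" using t domI[OF v] unfolding holds_def X_def isAND_def
      by (auto simp: dom_def)
  qed
  moreover have "en v S \<longleftrightarrow> holds (lit v) (X S)"
    using gv[OF v X_confs] t unfolding en_def isAND_def by auto
  ultimately show ?thesis by simp
qed

lemma en_OR: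
  assumes v: "v \<in> I" and t: "isOR v"
  shows "en v S \<longleftrightarrow> dom (lit v) \<inter> S \<noteq> {}"
proof -
  have "holds (lit v) (X S) \<longleftrightarrow> dom (lit v) \<inter> S = {}"
  proof
    assume h: "holds (lit v) (X S)"
    show "dom (lit v) \<inter> S = {}"
    proof (rule ccontr)
      assume "dom (lit v) \<inter> S \<noteq> {}"
      then obtain j s where js: "lit v j = Some s" "j \<in> S" by auto
      then have "j \<in> I" using domI[OF v] by auto
      moreover have "s = (\<not> a j)" using t js unfolding isOR_def by auto
      moreover have "X S j = s" using h js unfolding holds_def by blast
      ultimately show False using js(2) unfolding X_def by simp
    qed
  next
    assume "dom (lit v) \<inter> S = {}"
    then show "holds (lit v) (X S)" using t domI[OF v] unfolding holds_def X_def isOR_def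
      by (auto simp: dom_def)
  qed
  moreover have "en v S \<longleftrightarrow> \<not> holds (lit v) (X S)"
    using gv[OF v X_confs] t unfolding en_def isOR_def by auto
  ultimately show ?thesis by simp
qed

lemma en_mono:
  assumes v: "v \<in> I" and SS: "S \<subseteq> S'" and e: "en v S"
  shows "en v S'"
proof (cases "isAND v")
  case True
  then show ?thesis using e SS en_AND[OF v True, of S] en_AND[OF v True, of S'] by auto
next
  case False
  then have "isOR v" using types[OF v] by simp
  then show ?thesis using e SS en_OR[OF v \<open>isOR v\<close>, of S] en_OR[OF v \<open>isOR v\<close>, of S'] by auto
qed

lemma W1:
  assumes B: "B \<subseteq> I" "B \<noteq> {}" "B \<noteq> I" and e: "\<forall>u\<in>B. en u B"
  shows False
proof (rule two_fp[of B "X B" "X {}"])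
  show "B \<subseteq> I" "B \<noteq> {}" "B \<noteq> I" using B .
  show "X B \<in> confs I" by (rule X_confs)
  show "X {} \<in> confs I" by (rule X_confs)
  show "\<And>u. u \<in> I - B \<Longrightarrow> X B u = X {} u" by (auto simp: X_def)
  obtain u where "u \<in> B" using B by blast
  then show "\<exists>u\<in>B. X B u \<noteq> X {} u" using B by (auto simp: X_def)
  show "\<And>u. u \<in> B \<Longrightarrow> g (X B) u = X B u" using e B unfolding en_def X_def by auto
  show "\<And>u. u \<in> B \<Longrightarrow> g (X {}) u = X {} u" unfolding X_empty using fca by simp
qed

lemma W2:
  assumes U: "U \<subseteq> I" "U \<noteq> {}" "U \<noteq> I" and e: "\<forall>u\<in>U. \<not> en u (I - U)"
  shows False
proof (rule two_fp[of U "X I" "X (I - U)"])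
  show "U \<subseteq> I" "U \<noteq> {}" "U \<noteq> I" using U .
  show "X I \<in> confs I" by (rule X_confs)
  show "X (I - U) \<in> confs I" by (rule X_confs)
  show "\<And>u. u \<in> I - U \<Longrightarrow> X I u = X (I - U) u" by (auto simp: X_def)
  obtain u where "u \<in> U" using U by blast
  then show "\<exists>u\<in>U. X I u \<noteq> X (I - U) u" using U by (auto simp: X_def)
  show "\<And>u. u \<in> U \<Longrightarrow> g (X I) u = X I u" unfolding X_I using fa by simp
  show "\<And>u. u \<in> U \<Longrightarrow> g (X (I - U)) u = X (I - U) u" using e U unfolding en_def X_def by auto
qed

lemma core_AND:
  assumes v: "v \<in> I" and t: "isAND v" and j: "j \<in> dom (lit v)" and k: "k \<in> dom (lit v)"
  shows "j = k"
proof (rule ccontr)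
  assume jk: "j \<noteq> k"
  define Fam where "Fam s = {S. s \<in> S \<and> S \<subseteq> I - {v} \<and> (\<forall>u\<in>I - {v}. en u S \<longrightarrow> u \<in> S)}" for s
  define Cl where "Cl s = \<Inter> (Fam s)" for s
  have famI: "I - {v} \<in> Fam s" if "s \<in> I - {v}" for s using that by (auto simp: Fam_def)
  have cl_in: "Cl s \<in> Fam s" if s: "s \<in> I - {v}" for s
  proof -
    have "s \<in> Cl s" by (auto simp: Cl_def Fam_def)
    moreover have "Cl s \<subseteq> I - {v}" using famI[OF s] by (auto simp: Cl_def)
    moreover have "u \<in> Cl s" if u: "u \<in> I - {v}" "en u (Cl s)" for u
      unfolding Cl_def
    proof
      fix S assume S: "S \<in> Fam s"
      then have "Cl s \<subseteq> S" by (auto simp: Cl_def)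
      then have "en u S" using en_mono u by blast
      then show "u \<in> S" using S u(1) by (auto simp: Fam_def)
    qed
    ultimately show ?thesis by (auto simp: Fam_def)
  qed
  have least: "Cl s \<subseteq> S" if "S \<in> Fam s" for s S using that by (auto simp: Cl_def)
  have supp: "en u (Cl s)" if s: "s \<in> I - {v}" and u: "u \<in> Cl s" "u \<noteq> s" for s u
  proof (rule ccontr)
    assume nu: "\<not> en u (Cl s)"
    have c: "Cl s \<in> Fam s" by (rule cl_in[OF s])
    have "Cl s - {u} \<in> Fam s"
    proof -
      have "u' \<in> Cl s - {u}" if u': "u' \<in> I - {v}" "en u' (Cl s - {u})" for u'
      proof -
        have "en u' (Cl s)" using en_mono[of u' "Cl s - {u}" "Cl s"] u' by blast
        then have "u' \<in> Cl s" using c u'(1) by (auto simp: Fam_def)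
        moreover have "u' \<noteq> u" using nu en_mono[of u' "Cl s - {u}" "Cl s"] u' by blast
        ultimately show ?thesis by auto
      qed
      then show ?thesis using c u(2) by (auto simp: Fam_def)
    qed
    then have "Cl s \<subseteq> Cl s - {u}" by (rule least)
    then show False using u(1) by auto
  qed
  have i: "\<not> en s (Cl s)" if s: "s \<in> I - {v}" for s
  proof
    assume es: "en s (Cl s)"
    have c: "Cl s \<in> Fam s" by (rule cl_in[OF s])
    show False
    proof (rule W1[of "Cl s"])
      show "Cl s \<subseteq> I" using c by (auto simp: Fam_def)
      show "Cl s \<noteq> {}" using c by (auto simp: Fam_def)
      show "Cl s \<noteq> I" using c v by (auto simp: Fam_def)
      show "\<forall>u\<in>Cl s. en u (Cl s)" using supp[OF s] es by blast
    qed
  qed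
  have ii: "en v (Cl s)" if s: "s \<in> I - {v}" for s
  proof (rule ccontr)
    assume nv: "\<not> en v (Cl s)"
    have c: "Cl s \<in> Fam s" by (rule cl_in[OF s])
    have eq: "I - (I - Cl s) = Cl s" using c by (auto simp: Fam_def)
    show False
    proof (rule W2[of "I - Cl s"])
      show "I - Cl s \<subseteq> I" by auto
      show "I - Cl s \<noteq> {}" using c v by (auto simp: Fam_def)
      show "I - Cl s \<noteq> I" using c s by (auto simp: Fam_def)
      show "\<forall>u\<in>I - Cl s. \<not> en u (I - (I - Cl s))" unfolding eq using nv c by (auto simp: Fam_def)
    qed
  qed
  have sub: "dom (lit v) \<subseteq> Cl s" if s: "s \<in> I - {v}" for s
    using ii[OF s] en_AND[OF v t] by blast
  have dI: "dom (lit v) \<subseteq> I" by (rule domI[OF v])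
  have vnd: "v \<notin> dom (lit v)"
  proof
    assume vd: "v \<in> dom (lit v)"
    obtain s where s: "s \<in> {j, k}" "s \<noteq> v" using jk by auto
    then have sI: "s \<in> I - {v}" using j k dI by auto
    have "Cl s \<subseteq> I - {v}" using cl_in[OF sI] by (auto simp: Fam_def)
    then show False using sub[OF sI] vd by auto
  qed
  have jI: "j \<in> I - {v}" and kI: "k \<in> I - {v}" using j k dI vnd by auto
  have kj: "k \<in> Cl j" using sub[OF jI] k by auto
  have jk2: "j \<in> Cl k" using sub[OF kI] j by auto
  have "Cl k \<in> Fam j" using cl_in[OF kI] jk2 by (auto simp: Fam_def)
  then have "Cl j \<subseteq> Cl k" by (rule least)
  moreover have "Cl j \<in> Fam k" using cl_in[OF jI] kj by (auto simp: Fam_def)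
  then have "Cl k \<subseteq> Cl j" by (rule least)
  ultimately have eqc: "Cl j = Cl k" by auto
  have "en j (Cl k)" using supp[OF kI jk2] jk by simp
  then show False using i[OF jI] eqc by simp
qed

lemma single:
  assumes v: "v \<in> I" and j: "j \<in> dom (lit v)" and k: "k \<in> dom (lit v)"
  shows "j = k"
proof (cases "isAND v")
  case True
  then show ?thesis by (rule core_AND[OF v _ j k])
next
  case False
  then have o: "isOR v" using types[OF v] by simp
  have cc2: "compl I (compl I a) = a" using aC by (auto simp: compl_def confs_def intro!: ext)
  interpret c: cA I g lit cc "compl I a"
    by (intro cA.intro mn_axioms cA_axioms.intro compl_confs) (simp_all add: fca fa cc2)
  have "c.isAND v"
    unfolding c.isAND_def
  proof
    show "\<forall>j s. lit v j = Some s \<longrightarrow> s = compl I a j"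
    proof (intro allI impI)
      fix j s assume js: "lit v j = Some s"
      then have "j \<in> I" using domI[OF v] by auto
      then show "s = compl I a j" using o js unfolding isOR_def compl_def by auto
    qed
    show "cc v = compl I a v" using o v unfolding isOR_def compl_def by auto
  qed
  then show ?thesis using c.core_AND[OF v _ j k] by simp
qed

end

lemma orbit_cycle:
  fixes p :: "'v \<Rightarrow> 'v"
  assumes fin: "finite I" and v0: "v0 \<in> I" and pI: "\<And>v. v \<in> I \<Longrightarrow> p v \<in> I"
    and cl: "\<And>J. J \<subseteq> I \<Longrightarrow> J \<noteq> {} \<Longrightarrow> \<forall>v\<in>J. p v \<in> J \<Longrightarrow> J = I"
  shows "\<exists>vs. distinct vs \<and> set vs = I \<and> vs \<noteq> [] \<and> cycle_arcs vs = {(p i, i) | i. i \<in> I}"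
proof -
  define n where "n = card I"
  define P where "P m = (p ^^ m) v0" for m
  have PS: "P (Suc m) = p (P m)" for m by (simp add: P_def)
  have P0: "P 0 = v0" by (simp add: P_def)
  have PI: "P m \<in> I" for m by (induction m) (simp_all add: PS P0 v0 pI)
  have O: "range P = I"
  proof (rule cl)
    show "range P \<subseteq> I" using PI by auto
    show "range P \<noteq> {}" by auto
    show "\<forall>v\<in>range P. p v \<in> range P"
    proof
      fix v assume "v \<in> range P"
      then obtain m where "v = P m" by auto
      then show "p v \<in> range P" using PS by (metis rangeI)
    qed
  qed
  have pimg: "p ` I = I"
  proof (rule cl)
    show "p ` I \<subseteq> I" using pI by auto
    show "p ` I \<noteq> {}" using v0 by auto
    show "\<forall>v\<in>p ` I. p v \<in> p ` I" using pI by auto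
  qed
  have n0: "0 < n" using fin v0 by (auto simp: n_def card_gt_0_iff)
  have per: "\<exists>k<b. P m = P k" if ab: "a < b" "P a = P b" for a b m
  proof (induction m)
    case 0 then show ?case using ab(1) by (intro exI[of _ "0::nat"]) auto
  next
    case (Suc m)
    then obtain k where k: "k < b" "P m = P k" by blast
    show ?case
    proof (cases "Suc k < b")
      case True then show ?thesis using k PS by metis
    next
      case False then have "Suc k = b" using k by auto
      then have "P (Suc m) = P a" using k ab PS by metis
      then show ?thesis using ab(1) by blast
    qed
  qed
  have inj: "inj_on P {..<n}"
  proof (rule inj_onI, rule ccontr)
    fix a b assume a: "a \<in> {..<n}" "b \<in> {..<n}" "P a = P b" "a \<noteq> b"
    obtain a' b' where ab: "a' < b'" "b' < n" "P a' = P b'"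
    proof (cases "a < b")
      case True then show ?thesis using that a by auto
    next
      case False then have "b < a" using a(4) by auto
      then show ?thesis using that a by auto
    qed
    have "I \<subseteq> P ` {..<b'}"
    proof
      fix x assume "x \<in> I"
      then obtain m where "x = P m" using O by auto
      then obtain k where "k < b'" "x = P k" using per[OF ab(1) ab(3)] by blast
      then show "x \<in> P ` {..<b'}" by auto
    qed
    then have "card I \<le> card (P ` {..<b'})" by (simp add: card_mono)
    also have "\<dots> \<le> b'" using card_image_le[of "{..<b'}" P] by simp
    finally show False using ab(2) n_def by simp
  qed
  have img: "P ` {..<n} = I"
  proof (rule card_subset_eq[OF fin])
    show "P ` {..<n} \<subseteq> I" using PI by auto
    show "card (P ` {..<n}) = card I" using card_image[OF inj] n_def by simp
  qed
  have injP: "a = b" if "a < n" "b < n" "P a = P b" for a b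
    using inj that by (auto simp: inj_on_def)
  have Pn: "P n = v0"
  proof -
    obtain w where w: "w \<in> I" "v0 = p w" using pimg v0 by (metis imageE)
    then obtain m where m: "m < n" "w = P m" using img by (metis imageE lessThan_iff)
    have v0m: "P (Suc m) = v0" using w m PS by simp
    show ?thesis
    proof (cases "Suc m < n")
      case True
      then have "Suc m = 0" using injP[of "Suc m" 0] v0m P0 n0 by simp
      then show ?thesis by simp
    next
      case False then have "Suc m = n" using m by simp
      then show ?thesis using v0m by simp
    qed
  qed
  define vs where "vs = map (\<lambda>k. P (n - 1 - k)) [0..<n]"
  have len: "length vs = n" by (simp add: vs_def)
  have nth: "vs ! k = P (n - 1 - k)" if "k < n" for k using that by (simp add: vs_def)
  have dist: "distinct vs"
    unfolding vs_def distinct_map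
  proof
    show "distinct [0..<n]" by simp
    show "inj_on (\<lambda>k. P (n - 1 - k)) (set [0..<n])"
    proof (rule inj_onI)
      fix x y assume xy: "x \<in> set [0..<n]" "y \<in> set [0..<n]" "P (n - 1 - x) = P (n - 1 - y)"
      then have "n - 1 - x = n - 1 - y" using injP[of "n - 1 - x" "n - 1 - y"] n0 by simp
      then show "x = y" using xy by auto
    qed
  qed
  have setv: "set vs = I"
  proof -
    have "set vs = (\<lambda>k. P (n - 1 - k)) ` {..<n}" by (auto simp: vs_def)
    also have "\<dots> = P ` {..<n}"
    proof
      show "(\<lambda>k. P (n - 1 - k)) ` {..<n} \<subseteq> P ` {..<n}" using n0 by auto
      show "P ` {..<n} \<subseteq> (\<lambda>k. P (n - 1 - k)) ` {..<n}"
      proof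
        fix x assume "x \<in> P ` {..<n}"
        then obtain m where m: "m < n" "x = P m" by auto
        then have "x = P (n - 1 - (n - 1 - m))" by simp
        then show "x \<in> (\<lambda>k. P (n - 1 - k)) ` {..<n}" using m(1) n0
          by (intro image_eqI[where x="n - 1 - m"]) auto
      qed
    qed
    finally show ?thesis using img by simp
  qed
  have arcs: "cycle_arcs vs = {(p i, i) | i. i \<in> I}"
  proof
    show "cycle_arcs vs \<subseteq> {(p i, i) | i. i \<in> I}"
    proof
      fix e assume "e \<in> cycle_arcs vs"
      then obtain k where k: "k < n" "e = (vs ! k, vs ! ((k + 1) mod n))"
        unfolding cycle_arcs_def len by auto
      show "e \<in> {(p i, i) | i. i \<in> I}"
      proof (cases "k + 1 < n")
        case True
        then have md: "(k+1) mod n = k + 1" by simp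
        have e1: "n - 1 - k = Suc (n - 1 - (k + 1))" using True by simp
        have "vs ! k = p (vs ! (k+1))" using True nth k(1) PS e1 by simp
        then show ?thesis using k md PI nth True by auto
      next
        case False then have kn: "k = n - 1" using k by simp
        then have md: "(k+1) mod n = 0" using n0 by simp
        have e1: "n = Suc (n - 1)" using n0 by simp
        have "vs ! k = P 0" using nth k kn by simp
        also have "\<dots> = P n" using Pn P0 by simp
        also have "\<dots> = p (P (n - 1))" using PS e1 by metis
        also have "\<dots> = p (vs ! 0)" using nth n0 by simp
        finally show ?thesis using k md PI nth n0 by auto
      qed
    qed
    show "{(p i, i) | i. i \<in> I} \<subseteq> cycle_arcs vs"
    proof
      fix e assume "e \<in> {(p i, i) | i. i \<in> I}"
      then obtain i where i: "i \<in> I" "e = (p i, i)" by auto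
      obtain m where m: "m < n" "i = P m" using img i(1) by (metis imageE lessThan_iff)
      show "e \<in> cycle_arcs vs"
      proof (cases "m + 1 < n")
        case True
        define k where "k = n - 2 - m"
        have k1: "k + 1 < n" "k < n" using True unfolding k_def by auto
        have md: "(k+1) mod n = k + 1" using k1 by simp
        have e1: "n - 1 - (k + 1) = m" using True unfolding k_def by arith
        have e2: "n - 1 - k = Suc m" using True unfolding k_def by arith
        have a1: "vs ! (k+1) = i" using nth[OF k1(1)] m e1 by simp
        have a2: "vs ! k = p i" using nth[OF k1(2)] m e2 PS by simp
        have "e = (vs ! k, vs ! ((k + 1) mod n))" using md a1 a2 i(2) by simp
        then show ?thesis unfolding cycle_arcs_def len using k1 by blast
      next
        case False then have mn: "m = n - 1" using m by simp
        define k where "k = n - 1"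
        have k1: "k < n" using n0 by (simp add: k_def)
        have md: "(k+1) mod n = 0" using n0 by (simp add: k_def)
        have a1: "vs ! 0 = i" using nth[of 0] n0 m mn by simp
        have e1: "n = Suc (n - 1)" using n0 by simp
        have "vs ! k = P 0" using nth[OF k1] by (simp add: k_def)
        also have "\<dots> = P n" using Pn P0 by simp
        also have "\<dots> = p (P (n - 1))" using PS e1 by metis
        also have "\<dots> = p i" using m mn by simp
        finally have a2: "vs ! k = p i" .
        have "e = (vs ! k, vs ! ((k + 1) mod n))" using md a1 a2 i(2) by simp
        then show ?thesis unfolding cycle_arcs_def len using k1 by blast
      qed
    qed
  qed
  show ?thesis using dist setv arcs n0 len by (intro exI[of _ vs]) auto
qed

lemma compl_in: "compl J y \<in> confs J" by (auto simp: compl_def confs_def)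

context mn
begin

lemma cycle_build:
  assumes dp: "\<And>v. v \<in> I \<Longrightarrow> dom (lit v) = {p v}"
  shows "\<exists>vs. is_full_cycle I g vs"
proof -
  have pI: "p v \<in> I" if "v \<in> I" for v using dp[OF that] domI[OF that] by auto
  define sv where "sv v = the (lit v (p v))" for v
  have lsv: "lit v (p v) = Some (sv v)" if "v \<in> I" for v
  proof -
    have "p v \<in> dom (lit v)" using dp[OF that] by simp
    then obtain y where "lit v (p v) = Some y" by auto
    then show ?thesis by (simp add: sv_def)
  qed
  have lnone: "lit v u = None" if "v \<in> I" "u \<noteq> p v" for v u
    using dp[OF that(1)] that(2) by (auto simp: dom_def)
  have hd: "holds (lit v) x = (x (p v) = sv v)" if "v \<in> I" for v x
  proof
    assume "holds (lit v) x" then show "x (p v) = sv v" using lsv[OF that] unfolding holds_def by blast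
  next
    assume "x (p v) = sv v"
    then show "holds (lit v) x" unfolding holds_def
    proof (intro allI impI)
      fix j s assume "x (p v) = sv v" "lit v j = Some s"
      then show "x j = s" using lsv[OF that] lnone[OF that, of j] by (cases "j = p v") auto
    qed
  qed
  have gdep: "g x v = ((x (p v) = sv v) = cc v)" if "v \<in> I" "x \<in> confs I" for v x
    using gv[OF that] hd[OF that(1)] by simp
  have pcl: "J = I" if J: "J \<subseteq> I" "J \<noteq> {}" "\<forall>v\<in>J. p v \<in> J" for J
  proof (rule ccontr)
    assume JI: "J \<noteq> I"
    define w :: "'v \<Rightarrow> bool" where "w = (\<lambda>_. False)"
    have wc: "w \<in> confs (I - J)" by (simp add: w_def confs_def)
    have sd: "sub_data I J w" using J wc by (auto simp: sub_data_def)
    then have un: "uniq J (subnet I g J w)" using mini JI unfolding minimal_def by blast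
    have "\<not> uniq J (subnet I g J w)"
    proof (rule selfdual_nonuniq[OF J(2) subnet_oz])
      fix y v assume y: "y \<in> confs J" and v: "v \<in> J"
      have vI: "v \<in> I" and pv: "p v \<in> J" using v J by auto
      have c1: "(\<lambda>u. if u \<in> J then y u else w u) \<in> confs I" by (rule glue_confs[OF y wc J(1)])
      have c2: "(\<lambda>u. if u \<in> J then compl J y u else w u) \<in> confs I"
        by (rule glue_confs[OF compl_in wc J(1)])
      show "subnet I g J w (compl J y) v = (\<not> subnet I g J w y v)"
        using gdep[OF vI c1] gdep[OF vI c2] v pv unfolding subnet_def compl_def by (simp; blast)
    qed
    with un show False by simp
  qed
  have arcs_eq: "(pos_arc I g j i \<or> neg_arc I g j i) \<longleftrightarrow> i \<in> I \<and> j = p i" for i j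
  proof (cases "i \<in> I")
    case False then show ?thesis by (simp add: pos_arc_def neg_arc_def)
  next
    case True
    have "(pos_arc I g j i \<or> neg_arc I g j i) \<longleftrightarrow> lit i j \<noteq> None"
      using arcs_repr[OF rep True, of j] by auto
    also have "\<dots> \<longleftrightarrow> j = p i" using lsv[OF True] lnone[OF True, of j] by (cases "j = p i") auto
    finally show ?thesis using True by simp
  qed
  have nb: "\<not> (pos_arc I g j i \<and> neg_arc I g j i)" for i j
  proof (cases "i \<in> I")
    case False then show ?thesis by (simp add: pos_arc_def)
  next
    case True then show ?thesis using arcs_repr[OF rep True, of j] by auto
  qed
  obtain v0 where v0: "v0 \<in> I" using ne by auto
  obtain vs where vs: "distinct vs" "set vs = I" "vs \<noteq> []" "cycle_arcs vs = {(p i, i) | i. i \<in> I}"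
    using orbit_cycle[of I v0 p, OF fin v0 pI pcl] by blast
  have "{(j, i). pos_arc I g j i \<or> neg_arc I g j i} = cycle_arcs vs" using arcs_eq vs(4) by auto
  then have "is_full_cycle I g vs" using vs nb unfolding is_full_cycle_def by blast
  then show ?thesis by blast
qed

lemma cycA:
  assumes nu: "\<not> uniq I g"
    and c: "card I = 1 \<or> (\<exists>a b. a \<in> confs I \<and> b \<in> confs I \<and> g a = a \<and> g b = b \<and> a \<noteq> b)"
  shows "\<exists>vs. is_full_cycle I g vs"
proof -
  have dsingle: "\<exists>q. dom (lit v) = {q}" if v: "v \<in> I" for v
  proof -
    have dn: "dom (lit v) \<noteq> {}" by (rule dom_ne[OF nu v])
    have all: "\<forall>j\<in>dom (lit v). \<forall>k\<in>dom (lit v). j = k"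
    proof (cases "card I = 1")
      case True
      then obtain u where "I = {u}" by (auto simp: card_Suc_eq)
      then show ?thesis using domI[OF v] by auto
    next
      case False
      then obtain a b where ab: "a \<in> confs I" "b \<in> confs I" "g a = a" "g b = b" "a \<noteq> b"
        using c by blast
      have "b = compl I a" by (rule compl_fp[OF ab(1,3) ab(2,4,5)])
      then have fc: "g (compl I a) = compl I a" using ab(4) by simp
      interpret A: cA I g lit cc a
        by (intro cA.intro mn_axioms cA_axioms.intro ab(1) ab(3) fc)
      show ?thesis using A.single[OF v] by blast
    qed
    from dn obtain q where "q \<in> dom (lit v)" by blast
    then have "dom (lit v) = {q}" using all by blast
    then show ?thesis by blast
  qed
  define p where "p v = (SOME q. dom (lit v) = {q})" for v
  have "dom (lit v) = {p v}" if "v \<in> I" for v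
    using someI_ex[OF dsingle[OF that]] unfolding p_def .
  then show ?thesis by (rule cycle_build)
qed

end

lemma fp_ext_gen:
  assumes "oz I h" "y \<in> confs I" "\<And>v. v \<in> I \<Longrightarrow> h y v = y v"
  shows "h y = y"
proof
  fix v show "h y v = y v"
    using assms by (cases "v \<in> I") (auto simp: oz_def confs_def)
qed

lemma single_dep:
  assumes r: "repr I g lit cc" and v: "v \<in> I" and d: "dom (lit v) = {q}" and x: "x \<in> confs I"
  shows "g x v = ((x q = the (lit v q)) = cc v)"
proof -
  have "q \<in> dom (lit v)" using d by simp
  then obtain s where s: "lit v q = Some s" by auto
  have ln: "lit v u = None" if "u \<noteq> q" for u using d that by auto
  have "holds (lit v) x = (x q = s)"
  proof
    assume "holds (lit v) x" then show "x q = s" using s unfolding holds_def by blast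
  next
    assume xq: "x q = s"
    show "holds (lit v) x" unfolding holds_def
    proof (intro allI impI)
      fix j t assume "lit v j = Some t"
      then show "x j = t" using s ln[of j] xq by (cases "j = q") auto
    qed
  qed
  moreover have "g x v = (holds (lit v) x = cc v)" using r v x unfolding repr_def by blast
  ultimately show ?thesis using s by simp
qed

lemma cycle_pred:
  assumes dv: "distinct vs" and i: "i \<in> set vs"
  shows "\<exists>q. {j. (j, i) \<in> cycle_arcs vs} = {q}"
proof -
  define n where "n = length vs"
  obtain m where m: "m < n" "vs ! m = i" using i unfolding n_def by (auto simp: in_set_conv_nth)
  have n0: "0 < n" using m by simp
  define k where "k = (if m = 0 then n - 1 else m - 1)"
  have kk: "k < n \<and> (k + 1) mod n = m"
  proof (cases "m = 0")
    case True
    then have "k = n - 1" by (simp add: k_def)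
    then show ?thesis using n0 True by simp
  next
    case False
    then have "k = m - 1" by (simp add: k_def)
    then have "k + 1 = m" using False by simp
    then show ?thesis using m(1) by simp
  qed
  have k: "k < n" "(k + 1) mod n = m" using kk by auto
  have e: "(vs ! k, i) = (vs ! k, vs ! ((k + 1) mod length vs))" using k(2) m(2) n_def by simp
  have k1': "k < length vs" using k(1) n_def by simp
  have ink: "(vs ! k, i) \<in> cycle_arcs vs" unfolding cycle_arcs_def mem_Collect_eq
    by (intro exI[of _ k] conjI e k1')
  have "j = vs ! k" if "(j, i) \<in> cycle_arcs vs" for j
  proof -
    have "\<exists>k'. (j, i) = (vs ! k', vs ! ((k' + 1) mod length vs)) \<and> k' < length vs"
      using that unfolding cycle_arcs_def by (simp only: mem_Collect_eq)
    then obtain k' where k00: "(j, i) = (vs ! k', vs ! ((k' + 1) mod length vs))" "k' < length vs"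
      by (elim exE conjE)
    then have k0: "k' < length vs" "j = vs ! k'" "i = vs ! ((k' + 1) mod length vs)" by simp_all
    then have k': "k' < n" "j = vs ! k'" "i = vs ! ((k' + 1) mod n)" unfolding n_def by auto
    have lt1: "(k' + 1) mod n < length vs" using n0 n_def by simp
    have lt2: "m < length vs" using m(1) n_def by simp
    have e: "(k' + 1) mod n = m" using nth_eq_iff_index_eq[OF dv lt1 lt2] k'(3) m(2) by simp
    have "k' = k"
    proof (cases "k' + 1 < n")
      case True then have "k' + 1 = m" using e by simp
      then show ?thesis unfolding k_def by simp
    next
      case False then have kn: "k' + 1 = n" using k'(1) by simp
      then have "m = 0" using e by simp
      then show ?thesis unfolding k_def using kn by simp
    qed
    then show ?thesis using k' by simp
  qed
  then have "{j. (j, i) \<in> cycle_arcs vs} = {vs ! k}" using ink by blast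
  then show ?thesis by blast
qed

lemma cycle_nonuniq:
  assumes c: "cls J h" and ozh: "oz J h" and fc: "is_full_cycle J h vs"
  shows "\<not> uniq J h"
proof -
  obtain lit cc where r: "repr J h lit cc" using c unfolding cls_def by blast
  have dv: "distinct vs" and sv: "set vs = J" and nv: "vs \<noteq> []"
    and ar: "{(j, i). pos_arc J h j i \<or> neg_arc J h j i} = cycle_arcs vs"
    using fc unfolding is_full_cycle_def by auto
  have dq: "\<exists>q. dom (lit v) = {q}" if v: "v \<in> J" for v
  proof -
    have "dom (lit v) = {j. (j, v) \<in> cycle_arcs vs}"
    proof (rule set_eqI)
      fix j
      have e2: "j \<in> dom (lit v) \<longleftrightarrow> (pos_arc J h j v \<or> neg_arc J h j v)"
        using arcs_repr[OF r v, of j] by auto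
      have e1: "(j, v) \<in> cycle_arcs vs \<longleftrightarrow> (pos_arc J h j v \<or> neg_arc J h j v)"
        unfolding ar[symmetric] by simp
      show "j \<in> dom (lit v) \<longleftrightarrow> j \<in> {j. (j, v) \<in> cycle_arcs vs}" using e1 e2 by simp
    qed
    then show ?thesis using cycle_pred[OF dv] v sv by auto
  qed
  have dJ: "dom (lit v) \<subseteq> J" if "v \<in> J" for v using r that unfolding repr_def by blast
  show ?thesis
  proof (rule selfdual_nonuniq[OF _ ozh])
    show "J \<noteq> {}" using sv nv by auto
    fix y v assume y: "y \<in> confs J" and v: "v \<in> J"
    obtain q where q: "dom (lit v) = {q}" using dq[OF v] by blast
    have qJ: "q \<in> J" using dJ[OF v] q by auto
    show "h (compl J y) v = (\<not> h y v)"
      using single_dep[OF r v q y] single_dep[OF r v q compl_in] qJ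
      by (simp add: compl_def; blast)
  qed
qed

lemma oz_neg_at: "oz I g \<Longrightarrow> i \<in> I \<Longrightarrow> oz I (neg_at i g)"
  unfolding oz_def neg_at_def by auto

lemma main:
  assumes "finite I" "I \<noteq> {}" "cls I g" "oz I g" "minimal I g" "\<not> uniq I g"
  shows "\<exists>vs. is_full_cycle I g vs"
  using assms
proof (induction "card I" arbitrary: I g rule: less_induct)
  case less
  obtain lit cc where rep: "repr I g lit cc" using less.prems(3) unfolding cls_def by blast
  interpret M: mn I g lit cc
    by (rule mn.intro) (use less.prems rep in auto)
  show ?case
  proof (cases "card I = 1 \<or> (\<exists>a b. a \<in> confs I \<and> b \<in> confs I \<and> g a = a \<and> g b = b \<and> a \<noteq> b)")
    case True then show ?thesis using M.cycA less.prems(6) by blast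
  next
    case False
    then have c2: "card I \<noteq> 1"
      and nofp2: "\<And>a b. a \<in> confs I \<Longrightarrow> b \<in> confs I \<Longrightarrow> g a = a \<Longrightarrow> g b = b \<Longrightarrow> a = b" by auto
    have nofp: "g y \<noteq> y" if "y \<in> confs I" for y
      using less.prems(6) nofp2 that unfolding uniq_def by blast
    obtain i where i: "i \<in> I" using less.prems(2) by blast
    have B: "I - {i} \<noteq> {}"
    proof
      assume "I - {i} = {}"
      then have "I = {i}" using i by auto
      then show False using c2 by simp
    qed
    define wb where "wb b = (\<lambda>u. u = i \<and> b)" for b :: bool
    have wbc: "wb b \<in> confs (I - (I - {i}))" for b using i by (auto simp: wb_def confs_def)
    have sdb: "sub_data I (I - {i}) (wb b)" for b using B i wbc by (auto simp: sub_data_def)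
    have unb: "uniq (I - {i}) (subnet I g (I - {i}) (wb b))" for b
      using less.prems(5) sdb i unfolding minimal_def by blast
    have elim: "\<exists>Y. Y \<in> confs I \<and> Y i = b \<and> (\<forall>u\<in>I - {i}. g Y u = Y u)" for b
    proof -
      obtain z where z: "z \<in> confs (I - {i})" "subnet I g (I - {i}) (wb b) z = z"
        using unb[of b] unfolding uniq_def by blast
      define Y where "Y = (\<lambda>u. if u \<in> I - {i} then z u else wb b u)"
      have Yc: "Y \<in> confs I" unfolding Y_def by (rule glue_confs[OF z(1) wbc]) auto
      have Yi: "Y i = b" by (simp add: Y_def wb_def)
      have "g Y u = Y u" if "u \<in> I - {i}" for u
      proof -
        have "subnet I g (I - {i}) (wb b) z u = g Y u" using that unfolding subnet_def Y_def by simp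
        then show ?thesis using fun_cong[OF z(2), of u] that by (simp add: Y_def)
      qed
      then show ?thesis using Yc Yi by blast
    qed
    obtain Y0 where Y0: "Y0 \<in> confs I" "Y0 i = False" "\<forall>u\<in>I - {i}. g Y0 u = Y0 u"
      using elim[of False] by blast
    obtain Y1 where Y1: "Y1 \<in> confs I" "Y1 i = True" "\<forall>u\<in>I - {i}. g Y1 u = Y1 u"
      using elim[of True] by blast
    have g0: "g Y0 i = True"
    proof (rule ccontr)
      assume a: "g Y0 i \<noteq> True"
      have "g Y0 v = Y0 v" if "v \<in> I" for v using Y0 a that by (cases "v = i") auto
      then have "g Y0 = Y0" by (rule M.fp_ext[OF Y0(1)])
      then show False using nofp[OF Y0(1)] by simp
    qed
    have g1: "g Y1 i = False"
    proof (rule ccontr)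
      assume a: "g Y1 i \<noteq> False"
      have "g Y1 v = Y1 v" if "v \<in> I" for v using Y1 a that by (cases "v = i") auto
      then have "g Y1 = Y1" by (rule M.fp_ext[OF Y1(1)])
      then show False using nofp[OF Y1(1)] by simp
    qed
    define gn where "gn = neg_at i g"
    have repn: "repr I gn lit (cc(i := \<not> cc i))" unfolding gn_def by (rule cls_neg[OF rep])
    have ozn: "oz I gn" unfolding gn_def by (rule oz_neg_at[OF less.prems(4) i])
    have fn0: "gn Y0 = Y0"
      by (rule fp_ext_gen[OF ozn Y0(1)]) (use Y0 g0 in \<open>auto simp: gn_def neg_at_def\<close>)
    have fn1: "gn Y1 = Y1"
      by (rule fp_ext_gen[OF ozn Y1(1)]) (use Y1 g1 in \<open>auto simp: gn_def neg_at_def\<close>)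
    have d01: "Y0 \<noteq> Y1" using Y0(2) Y1(2) by auto
    have nun: "\<not> uniq I gn" using fn0 fn1 d01 Y0(1) Y1(1) unfolding uniq_def by blast
    show ?thesis
    proof (cases "minimal I gn")
      case True
      interpret N: mn I gn lit "cc(i := \<not> cc i)"
        by (rule mn.intro) (use less.prems repn ozn True in auto)
      have "\<exists>vs. is_full_cycle I gn vs"
        using N.cycA[OF nun] fn0 fn1 d01 Y0(1) Y1(1) by blast
      then show ?thesis unfolding gn_def full_cycle_neg_at .
    next
      case False
      define Q where "Q = (\<lambda>(J, w). sub_data I J w \<and> J \<noteq> I \<and> \<not> uniq J (subnet I gn J w))"
      obtain J0 w0 where "Q (J0, w0)" using False unfolding minimal_def Q_def by auto
      then obtain Jw where Jw: "Q Jw" and lst: "\<forall>y. Q y \<longrightarrow> card (fst Jw) \<le> card (fst y)"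
        using ex_has_least_nat[of Q "(J0, w0)" "\<lambda>p. card (fst p)"] by blast
      obtain J w where Jw_eq: "Jw = (J, w)" by (cases Jw)
      have sdJ: "sub_data I J w" and JI: "J \<noteq> I" and nuJ: "\<not> uniq J (subnet I gn J w)"
        using Jw unfolding Jw_eq Q_def by auto
      have lstJ: "card J \<le> card K" if "Q (K, w')" for K w' using lst that unfolding Jw_eq by fastforce
      have JsI: "J \<subseteq> I" and Jne: "J \<noteq> {}" and wc: "w \<in> confs (I - J)"
        using sdJ unfolding sub_data_def by auto
      have finJ: "finite J" using JsI less.prems(1) finite_subset by blast
      have cardJ: "card J < card I" using JsI JI less.prems(1) by (simp add: psubset_card_mono)
      define hn where "hn = subnet I gn J w"
      have minJ: "minimal J hn"
        unfolding minimal_def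
      proof (intro allI impI)
        fix K w' assume a: "sub_data J K w' \<and> K \<noteq> J"
        then have KJ: "K \<subseteq> J" "K \<noteq> J" unfolding sub_data_def by auto
        have eq: "subnet J hn K w' = subnet I gn K (\<lambda>u. if u \<in> J then w' u else w u)"
          unfolding hn_def by (rule sub_sub[OF KJ(1)])
        have sdK: "sub_data I K (\<lambda>u. if u \<in> J then w' u else w u)"
          using sub_data_comp[OF sdJ] a by blast
        have KI: "K \<noteq> I" using KJ JsI JI by auto
        have cK: "card K < card J" using KJ finJ by (simp add: psubset_card_mono)
        show "uniq K (subnet J hn K w')"
        proof (rule ccontr)
          assume "\<not> uniq K (subnet J hn K w')"
          then have "Q (K, (\<lambda>u. if u \<in> J then w' u else w u))" unfolding Q_def eq using sdK KI by simp
          then have "card J \<le> card K" by (rule lstJ)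
          then show False using cK by simp
        qed
      qed
      have ozJ: "oz J hn" unfolding hn_def by (rule subnet_oz)
      have clsJ: "cls J hn" unfolding hn_def by (rule cls_subnet[OF repn JsI wc])
      have "\<exists>vs. is_full_cycle J hn vs"
        using less.hyps[OF cardJ finJ Jne clsJ ozJ minJ] nuJ unfolding hn_def by blast
      then obtain vs where fc: "is_full_cycle J hn vs" by blast
      show ?thesis
      proof (cases "i \<in> J")
        case False
        have nv: "gn x v = g x v" if "v \<in> J" for x v using False that by (auto simp: gn_def neg_at_def)
        have "subnet I gn J w y v = subnet I g J w y v" for y v
        proof (cases "v \<in> J")
          case True then show ?thesis unfolding subnet_def using nv[OF True] by simp
        next
          case False then show ?thesis unfolding subnet_def by simp
        qed
        then have "subnet I gn J w = subnet I g J w" by (intro ext)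
        moreover have "uniq J (subnet I g J w)" using less.prems(5) sdJ JI unfolding minimal_def by blast
        ultimately show ?thesis using nuJ by simp
      next
        case True
        have "subnet I g J w y v = neg_at i hn y v" for y v
        proof (cases "v = i")
          case True then show ?thesis using \<open>i \<in> J\<close> unfolding subnet_def hn_def gn_def neg_at_def by simp
        next
          case False then show ?thesis unfolding subnet_def hn_def gn_def neg_at_def by simp
        qed
        then have eqn: "subnet I g J w = neg_at i hn" by (intro ext)
        have "is_full_cycle J (subnet I g J w) vs" unfolding eqn full_cycle_neg_at by (rule fc)
        then have "\<not> uniq J (subnet I g J w)"
          by (rule cycle_nonuniq[OF cls_subnet[OF rep JsI wc] subnet_oz])
        moreover have "uniq J (subnet I g J w)" using less.prems(5) sdJ JI unfolding minimal_def by blast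
        ultimately show ?thesis by simp
      qed
    qed
  qed
qed

lemma and_net_repr:
  assumes an: "and_net V f"
  shows "repr V (subnet V f V (\<lambda>_. False))
     (\<lambda>i j. if pos_arc V f j i then Some True else if neg_arc V f j i then Some False else None)
     (\<lambda>_. True)"
  unfolding repr_def
proof (rule ballI, rule conjI)
  fix v assume v: "v \<in> V"
  show "dom (\<lambda>j. if pos_arc V f j v then Some True else if neg_arc V f j v then Some False else None) \<subseteq> V"
    by (auto simp: pos_arc_def neg_arc_def split: if_splits)
  show "\<forall>x\<in>confs V. subnet V f V (\<lambda>_. False) x v =
      (holds (\<lambda>j. if pos_arc V f j v then Some True else if neg_arc V f j v then Some False else None) x = True)"
  proof
    fix x assume x: "x \<in> confs V"
    have gl: "(\<lambda>u. if u \<in> V then x u else False) = x" using x by (auto simp: confs_def intro!: ext)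
    have s: "subnet V f V (\<lambda>_. False) x v = f x v" using v unfolding subnet_def gl by simp
    have nb: "\<forall>i j. \<not> (pos_arc V f j i \<and> neg_arc V f j i)" using an unfolding and_net_def by blast
    have fx: "f x v \<longleftrightarrow> (\<not> (\<exists>j. pos_arc V f j v \<and> \<not> x j)) \<and> \<not> (\<exists>j. neg_arc V f j v \<and> x j)"
      using an v x unfolding and_net_def by blast
    have "holds (\<lambda>j. if pos_arc V f j v then Some True else if neg_arc V f j v then Some False else None) x
        \<longleftrightarrow> (\<not> (\<exists>j. pos_arc V f j v \<and> \<not> x j)) \<and> \<not> (\<exists>j. neg_arc V f j v \<and> x j)"
      unfolding holds_def using nb by auto
    then show "subnet V f V (\<lambda>_. False) x v =
      (holds (\<lambda>j. if pos_arc V f j v then Some True else if neg_arc V f j v then Some False else None) x = True)"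
      using s fx by simp
  qed
qed

lemma cls_top:
  assumes an: "and_net V f" and sd: "sub_data V I z"
  shows "cls I (subnet V f I z)"
proof -
  have IV: "I \<subseteq> V" and zc: "z \<in> confs (V - I)" using sd unfolding sub_data_def by auto
  have "cls I (subnet V (subnet V f V (\<lambda>_. False)) I z)"
    by (rule cls_subnet[OF and_net_repr[OF an] IV zc])
  moreover have "subnet V (subnet V f V (\<lambda>_. False)) I z = subnet V f I (\<lambda>u. if u \<in> V then z u else False)"
    by (rule sub_sub[OF IV])
  moreover have "(\<lambda>u. if u \<in> V then z u else False) = z" using zc by (auto simp: confs_def intro!: ext)
  ultimately show ?thesis by simp
qed

theorem corollary9:
  fixes V :: "'v set" and f :: "('v \<Rightarrow> bool) \<Rightarrow> ('v \<Rightarrow> bool)"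
  assumes "finite V" and "V \<noteq> {}" and "and_net V f"
  shows "(\<forall>I z. sub_data V I z \<longrightarrow>
             (\<exists>!y. y \<in> confs I \<and> subnet V f I z y = y))
         \<longleftrightarrow>
         \<not> (\<exists>I z. sub_data V I z \<and>
               (positive_circular I (subnet V f I z) \<or> negative_circular I (subnet V f I z)))"
proof
  assume H: "\<forall>I z. sub_data V I z \<longrightarrow> (\<exists>!y. y \<in> confs I \<and> subnet V f I z y = y)"
  show "\<not> (\<exists>I z. sub_data V I z \<and>
               (positive_circular I (subnet V f I z) \<or> negative_circular I (subnet V f I z)))"
  proof
    assume "\<exists>I z. sub_data V I z \<and>
               (positive_circular I (subnet V f I z) \<or> negative_circular I (subnet V f I z))"
    then obtain I z where sd: "sub_data V I z"
      and c: "positive_circular I (subnet V f I z) \<or> negative_circular I (subnet V f I z)"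
      by (elim exE conjE)
    from c have "\<exists>vs. is_full_cycle I (subnet V f I z) vs"
      unfolding positive_circular_def negative_circular_def by (elim disjE conjE)
    then obtain vs where fc: "is_full_cycle I (subnet V f I z) vs" by (elim exE)
    have "\<not> uniq I (subnet V f I z)"
      by (rule cycle_nonuniq[OF cls_top[OF assms(3) sd] subnet_oz fc])
    moreover have "uniq I (subnet V f I z)" unfolding uniq_def by (rule H[rule_format, OF sd])
    ultimately show False by simp
  qed
next
  assume H: "\<not> (\<exists>I z. sub_data V I z \<and>
               (positive_circular I (subnet V f I z) \<or> negative_circular I (subnet V f I z)))"
  show "\<forall>I z. sub_data V I z \<longrightarrow> (\<exists>!y. y \<in> confs I \<and> subnet V f I z y = y)"
  proof (rule ccontr)
    assume "\<not> (\<forall>I z. sub_data V I z \<longrightarrow> (\<exists>!y. y \<in> confs I \<and> subnet V f I z y = y))"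
    then have "\<exists>I z. sub_data V I z \<and> \<not> uniq I (subnet V f I z)"
      unfolding uniq_def by (simp only: not_all not_imp)
    then obtain I0 z0 where "sub_data V I0 z0" "\<not> uniq I0 (subnet V f I0 z0)"
      by (elim exE conjE)
    define Q where "Q = (\<lambda>(I, z). sub_data V I z \<and> \<not> uniq I (subnet V f I z))"
    have "Q (I0, z0)" using \<open>sub_data V I0 z0\<close> \<open>\<not> uniq I0 (subnet V f I0 z0)\<close> by (simp add: Q_def)
    then obtain Iz where Iz: "Q Iz" and lst: "\<forall>y. Q y \<longrightarrow> card (fst Iz) \<le> card (fst y)"
      using ex_has_least_nat[of Q "(I0, z0)" "\<lambda>p. card (fst p)"] by blast
    obtain I z where Iz_eq: "Iz = (I, z)" by (cases Iz)
    have sd: "sub_data V I z" and nu: "\<not> uniq I (subnet V f I z)" using Iz unfolding Iz_eq Q_def by auto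
    have lstI: "card I \<le> card K" if "Q (K, w')" for K w' using lst[rule_format, OF that] unfolding Iz_eq by simp
    have IV: "I \<subseteq> V" and Ine: "I \<noteq> {}" using sd unfolding sub_data_def by auto
    have finI: "finite I" using IV assms(1) finite_subset by blast
    have minI: "minimal I (subnet V f I z)"
      unfolding minimal_def
    proof (intro allI impI)
      fix J w assume a: "sub_data I J w \<and> J \<noteq> I"
      then have JI: "J \<subseteq> I" "J \<noteq> I" unfolding sub_data_def by auto
      have eq: "subnet I (subnet V f I z) J w = subnet V f J (\<lambda>u. if u \<in> I then w u else z u)"
        by (rule sub_sub[OF JI(1)])
      have sdJ: "sub_data V J (\<lambda>u. if u \<in> I then w u else z u)"
        using sub_data_comp[OF sd] a by blast
      have cJ: "card J < card I" using JI finI by (simp add: psubset_card_mono)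
      show "uniq J (subnet I (subnet V f I z) J w)"
      proof (rule ccontr)
        assume "\<not> uniq J (subnet I (subnet V f I z) J w)"
        then have "Q (J, (\<lambda>u. if u \<in> I then w u else z u))" unfolding Q_def eq using sdJ by simp
        then have "card I \<le> card J" by (rule lstI)
        then show False using cJ by simp
      qed
    qed
    obtain vs where fc: "is_full_cycle I (subnet V f I z) vs"
      using main[OF finI Ine cls_top[OF assms(3) sd] subnet_oz minI nu] by blast
    have "positive_circular I (subnet V f I z) \<or> negative_circular I (subnet V f I z)"
      unfolding positive_circular_def negative_circular_def using fc by blast
    then have "\<exists>I z. sub_data V I z \<and>
               (positive_circular I (subnet V f I z) \<or> negative_circular I (subnet V f I z))"
      using sd by (intro exI conjI)
    with H show False by (rule notE)
  qed
qed

end
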